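(* Let $I$ be a conditional indicator w.r.t. $\mathcal{H}$ whose domain $\mathbb{D}_I$ is $\mathcal{H}$-decomposable. The following are equivalent: (1) $I$ is regular; (2) $I(X1_H)=I(X)1_H$ for all $X\in\mathbb{D}_I$ and $H\in\mathcal{H}$; (3) $I(X1_H+Y1_{\Omega\setminus H})=I(X)1_H+I(Y)1_{\Omega\setminus H}$ for all $X,Y\in\mathbb{D}_I$ and $H\in\mathcal{H}$.
   Context: Let $(\Omega,\mathcal{F},\mathbb{P})$ be a probability space with $\mathcal{F}$ complete, and $\mathcal{H}\subseteq\mathcal{F}$ a complete sub-$\sigma$-algebra. $\overline{\mathbb{R}}=\mathbb{R}\cup\{\pm\infty\}$ with conventions $r\pm\infty=\pm\infty$, $\infty-\infty=0$, $\infty+\infty=\infty$, $0\times(\pm\infty)=0$; $\mathbb{L}^0(G,\mathcal{G})$ is the set of $\mathcal{G}$-measurable random variables a.s. valued in $G$. $\operatorname{ess\,sup}_{\mathcal{H}}(X)$ is the smallest $\mathcal{H}$-measurable random variable dominating $X$ a.s., $\operatorname{ess\,inf}_{\mathcal{H}}(X)=-\operatorname{ess\,sup}_{\mathcal{H}}(-X)$. A conditional indicator w.r.t. $\mathcal{H}$ is a map $I:\mathbb{D}_I\to\mathbb{L}^0(\overline{\mathbb{R}},\mathcal{H})$, $0\in\mathbb{D}_I\subseteq\mathbb{L}^0(\overline{\mathbb{R}},\mathcal{F})$, with $I(X)\in[\operatorname{ess\,inf}_{\mathcal{H}}(X),\operatorname{ess\,sup}_{\mathcal{H}}(X)]$ a.s.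 and $\mathbb{D}_I+\mathbb{L}^0(\overline{\mathbb{R}},\mathcal{H})\subseteq\mathbb{D}_I$. $\mathbb{D}_I$ is $\mathcal{H}$-decomposable if $X1_H+Y1_{\Omega\setminus H}\in\mathbb{D}_I$ for $X,Y\in\mathbb{D}_I$, $H\in\mathcal{H}$. $I$ is regular if $\mathbb{D}_I$ is $\mathcal{H}$-decomposable and for $X,Y\in\mathbb{D}_I$, $H\in\mathcal{H}$, $X1_H=Y1_H$ implies $I(X)1_H=I(Y)1_H$. *)

theory Defs
  imports "HOL-Probability.Probability"
begin

text \<open>Addition on extended reals with the paper's convention: infinity minus infinity is 0
  (Isabelle's built-in ereal addition instead gives infinity for that case).\<close>
definition eadd :: "ereal \<Rightarrow> ereal \<Rightarrow> ereal" where
  "eadd a b = (if (a = \<infinity> \<and> b = -\<infinity>) \<or> (a = -\<infinity> \<and> b = \<infinity>) then 0 else a + b)"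

definition cond_ess_sup :: "'a measure \<Rightarrow> 'a measure \<Rightarrow> ('a \<Rightarrow> ereal) \<Rightarrow> 'a \<Rightarrow> ereal" where
  "cond_ess_sup M N X = (SOME S. S \<in> borel_measurable N \<and> (AE \<omega> in M. X \<omega> \<le> S \<omega>) \<and>
      (\<forall>T \<in> borel_measurable N. (AE \<omega> in M. X \<omega> \<le> T \<omega>) \<longrightarrow> (AE \<omega> in M. S \<omega> \<le> T \<omega>)))"

definition cond_ess_inf :: "'a measure \<Rightarrow> 'a measure \<Rightarrow> ('a \<Rightarrow> ereal) \<Rightarrow> 'a \<Rightarrow> ereal" where
  "cond_ess_inf M N X = (\<lambda>\<omega>. - cond_ess_sup M N (\<lambda>\<omega>. - X \<omega>) \<omega>)"

text \<open>Conditional indicator with domain D. Random variables are functions; since the paper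
  works with L0 (a.s.-equivalence classes), we require D and I to respect a.s. equality.\<close>
definition cond_indicator ::
  "'a measure \<Rightarrow> 'a measure \<Rightarrow> ('a \<Rightarrow> ereal) set \<Rightarrow> (('a \<Rightarrow> ereal) \<Rightarrow> 'a \<Rightarrow> ereal) \<Rightarrow> bool" where
  "cond_indicator M N D I \<longleftrightarrow>
     (\<lambda>_. 0) \<in> D \<and> D \<subseteq> borel_measurable M \<and>
     (\<forall>X \<in> D. I X \<in> borel_measurable N \<and>
        (AE \<omega> in M. cond_ess_inf M N X \<omega> \<le> I X \<omega> \<and> I X \<omega> \<le> cond_ess_sup M N X \<omega>)) \<and>
     (\<forall>X \<in> D. \<forall>Z \<in> borel_measurable N. (\<lambda>\<omega>. eadd (X \<omega>) (Z \<omega>)) \<in> D) \<and>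
     (\<forall>X \<in> D. \<forall>Y \<in> borel_measurable M. (AE \<omega> in M. X \<omega> = Y \<omega>) \<longrightarrow>
        Y \<in> D \<and> (AE \<omega> in M. I X \<omega> = I Y \<omega>))"

definition decomposable :: "'a measure \<Rightarrow> 'a measure \<Rightarrow> ('a \<Rightarrow> ereal) set \<Rightarrow> bool" where
  "decomposable M N D \<longleftrightarrow>
     (\<forall>X \<in> D. \<forall>Y \<in> D. \<forall>H \<in> sets N.
        (\<lambda>\<omega>. eadd (X \<omega> * indicator H \<omega>) (Y \<omega> * indicator (space M - H) \<omega>)) \<in> D)"

definition regular_ci ::
  "'a measure \<Rightarrow> 'a measure \<Rightarrow> ('a \<Rightarrow> ereal) set \<Rightarrow> (('a \<Rightarrow> ereal) \<Rightarrow> 'a \<Rightarrow> ereal) \<Rightarrow> bool" where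
  "regular_ci M N D I \<longleftrightarrow> decomposable M N D \<and>
     (\<forall>X \<in> D. \<forall>Y \<in> D. \<forall>H \<in> sets N.
        (AE \<omega> in M. X \<omega> * indicator H \<omega> = Y \<omega> * indicator H \<omega>) \<longrightarrow>
        (AE \<omega> in M. I X \<omega> * indicator H \<omega> = I Y \<omega> * indicator H \<omega>))"

end

theory Submission
  imports Defs
begin

lemma eadd_split:
  "eadd (a * indicator H w) (b * indicator (S - H) w) = (if w \<in> H then a else if w \<in> S then b else 0)"
  by (auto simp: eadd_def indicator_def)

lemma I_zero:
  assumes "cond_indicator M N D I"
  shows "AE w in M. I (\<lambda>_. 0) w = 0"
proof -
  let ?P = "\<lambda>S. S \<in> borel_measurable N \<and> (AE w in M. (0::ereal) \<le> S w) \<and>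
      (\<forall>T \<in> borel_measurable N. (AE w in M. (0::ereal) \<le> T w) \<longrightarrow> (AE w in M. S w \<le> T w))"
  have ex: "?P (\<lambda>_. 0)" by simp
  define S where "S = cond_ess_sup M N (\<lambda>_. 0)"
  have PS: "?P S" unfolding S_def cond_ess_sup_def by (rule someI[of ?P, OF ex])
  have a1: "AE w in M. S w \<le> 0" using PS[THEN conjunct2, THEN conjunct2, rule_format, of "\<lambda>_. 0"] by simp
  have a2: "AE w in M. 0 \<le> S w" using PS by blast
  have inf: "cond_ess_inf M N (\<lambda>_. 0) = (\<lambda>w. - S w)"
    unfolding cond_ess_inf_def S_def by simp
  have z: "(\<lambda>_. 0) \<in> D" using assms unfolding cond_indicator_def by blast
  have "\<forall>X \<in> D. (AE w in M. cond_ess_inf M N X w \<le> I X w \<and> I X w \<le> cond_ess_sup M N X w)"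
    using assms unfolding cond_indicator_def by blast
  then have "AE w in M. cond_ess_inf M N (\<lambda>_. 0) w \<le> I (\<lambda>_. 0) w \<and> I (\<lambda>_. 0) w \<le> cond_ess_sup M N (\<lambda>_. 0) w"
    using z by blast
  then have a3: "AE w in M. - S w \<le> I (\<lambda>_. 0) w \<and> I (\<lambda>_. 0) w \<le> S w"
    by (simp only: inf S_def[symmetric])
  show ?thesis using a1 a2 a3
  proof eventually_elim
    case (elim w)
    then have "S w = 0" by (metis order.antisym)
    then show ?case using elim by (metis ereal_uminus_zero order.antisym)
  qed
qed

theorem mainTheorem15:
  fixes M N :: "'a measure" and D :: "('a \<Rightarrow> ereal) set"
    and I :: "('a \<Rightarrow> ereal) \<Rightarrow> 'a \<Rightarrow> ereal"
  assumes "prob_space M" and "complete_measure M"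
    and "subalgebra M N" and "\<forall>A \<in> null_sets M. A \<in> sets N"
    and "cond_indicator M N D I" and "decomposable M N D"
  shows "(regular_ci M N D I \<longleftrightarrow>
           (\<forall>X \<in> D. \<forall>H \<in> sets N.
              AE \<omega> in M. I (\<lambda>\<omega>. X \<omega> * indicator H \<omega>) \<omega> = I X \<omega> * indicator H \<omega>))
       \<and> ((\<forall>X \<in> D. \<forall>H \<in> sets N.
              AE \<omega> in M. I (\<lambda>\<omega>. X \<omega> * indicator H \<omega>) \<omega> = I X \<omega> * indicator H \<omega>) \<longleftrightarrow>
          (\<forall>X \<in> D. \<forall>Y \<in> D. \<forall>H \<in> sets N.
              AE \<omega> in M. I (\<lambda>\<omega>. eadd (X \<omega> * indicator H \<omega>) (Y \<omega> * indicator (space M - H) \<omega>)) \<omega>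
                = eadd (I X \<omega> * indicator H \<omega>) (I Y \<omega> * indicator (space M - H) \<omega>)))"
proof -
  have ci: "cond_indicator M N D I" by fact
  have dec: "decomposable M N D" by fact
  have sub: "sets N \<subseteq> sets M" "space N = space M" using assms(3) by (auto simp: subalgebra_def)
  have zD: "(\<lambda>_. 0) \<in> D" using ci unfolding cond_indicator_def by auto
  have DM: "D \<subseteq> borel_measurable M" using ci unfolding cond_indicator_def by auto
  have I0: "AE w in M. I (\<lambda>_. 0) w = 0" by (rule I_zero[OF ci])
  have resp: "\<And>X Y. X \<in> D \<Longrightarrow> Y \<in> borel_measurable M \<Longrightarrow> (AE w in M. X w = Y w) \<Longrightarrow>
        Y \<in> D \<and> (AE w in M. I X w = I Y w)"
    using ci unfolding cond_indicator_def by blast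
  have HD: "(\<lambda>w. X w * indicator H w) \<in> D" if "X \<in> D" "H \<in> sets N" for X H
  proof -
    have "(\<lambda>w. eadd (X w * indicator H w) (0 * indicator (space M - H) w)) \<in> D"
      using dec[unfolded decomposable_def, rule_format, OF that(1) zD that(2)] by simp
    moreover have "(\<lambda>w. eadd (X w * indicator H w) (0 * indicator (space M - H) w)) = (\<lambda>w. X w * indicator H w)"
      by (auto simp: eadd_def indicator_def)
    ultimately show ?thesis by simp
  qed
  have HM: "(\<lambda>w. X w * indicator H w) \<in> borel_measurable M" if "X \<in> D" "H \<in> sets N" for X H
    using that DM sub by (auto intro!: borel_measurable_ereal_times)
  let ?C2 = "\<forall>X \<in> D. \<forall>H \<in> sets N.
              AE \<omega> in M. I (\<lambda>\<omega>. X \<omega> * indicator H \<omega>) \<omega> = I X \<omega> * indicator H \<omega>"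
  have A: "regular_ci M N D I \<longleftrightarrow> ?C2"
  proof
    assume R: "regular_ci M N D I"
    show ?C2
    proof (intro ballI)
      fix X H assume X: "X \<in> D" and H: "H \<in> sets N"
      let ?XH = "\<lambda>w. X w * indicator H w"
      have RR: "\<And>X Y H. X \<in> D \<Longrightarrow> Y \<in> D \<Longrightarrow> H \<in> sets N \<Longrightarrow>
          (AE w in M. X w * indicator H w = Y w * indicator H w) \<Longrightarrow>
          (AE w in M. I X w * indicator H w = I Y w * indicator H w)"
        using R unfolding regular_ci_def by blast
      have "AE w in M. ?XH w * indicator H w = X w * indicator H w"
        by (rule AE_I2) (simp add: indicator_def)
      then have 1: "AE w in M. I ?XH w * indicator H w = I X w * indicator H w"
        by (rule RR[OF HD[OF X H] X H])
      have H': "space M - H \<in> sets N" using H sub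
        by (metis sets.compl_sets)
      have "AE w in M. ?XH w * indicator (space M - H) w = 0 * indicator (space M - H) w"
        by (rule AE_I2) (simp add: indicator_def)
      then have 2: "AE w in M. I ?XH w * indicator (space M - H) w = I (\<lambda>_. 0) w * indicator (space M - H) w"
        by (rule RR[OF HD[OF X H] zD H'])
      show "AE w in M. I ?XH w = I X w * indicator H w"
        using 1 2 I0 AE_space
      proof eventually_elim
        case (elim w)
        then show ?case by (cases "w \<in> H") (auto simp: indicator_def)
      qed
    qed
  next
    assume C2: ?C2
    show "regular_ci M N D I" unfolding regular_ci_def
    proof (intro conjI dec ballI impI)
      fix X Y H assume X: "X \<in> D" and Y: "Y \<in> D" and H: "H \<in> sets N"
        and E: "AE w in M. X w * indicator H w = Y w * indicator H w"
      have "AE w in M. I (\<lambda>w. X w * indicator H w) w = I (\<lambda>w. Y w * indicator H w) w"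
        using resp[OF HD[OF X H] HM[OF Y H] E] by blast
      moreover have "AE w in M. I (\<lambda>w. X w * indicator H w) w = I X w * indicator H w"
        using C2 X H by blast
      moreover have "AE w in M. I (\<lambda>w. Y w * indicator H w) w = I Y w * indicator H w"
        using C2 Y H by blast
      ultimately show "AE w in M. I X w * indicator H w = I Y w * indicator H w"
        by eventually_elim simp
    qed
  qed
  have B: "?C2 \<longleftrightarrow> (\<forall>X \<in> D. \<forall>Y \<in> D. \<forall>H \<in> sets N.
              AE \<omega> in M. I (\<lambda>\<omega>. eadd (X \<omega> * indicator H \<omega>) (Y \<omega> * indicator (space M - H) \<omega>)) \<omega>
                = eadd (I X \<omega> * indicator H \<omega>) (I Y \<omega> * indicator (space M - H) \<omega>))"
  proof
    assume C2: ?C2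
    show "\<forall>X \<in> D. \<forall>Y \<in> D. \<forall>H \<in> sets N.
              AE \<omega> in M. I (\<lambda>\<omega>. eadd (X \<omega> * indicator H \<omega>) (Y \<omega> * indicator (space M - H) \<omega>)) \<omega>
                = eadd (I X \<omega> * indicator H \<omega>) (I Y \<omega> * indicator (space M - H) \<omega>)"
    proof (intro ballI)
      fix X Y H assume X: "X \<in> D" and Y: "Y \<in> D" and H: "H \<in> sets N"
      define Z where "Z = (\<lambda>w. eadd (X w * indicator H w) (Y w * indicator (space M - H) w))"
      have ZD: "Z \<in> D" using dec X Y H unfolding decomposable_def Z_def by blast
      have H': "space M - H \<in> sets N" using H sub by (metis sets.compl_sets)
      have e1: "(\<lambda>w. Z w * indicator H w) = (\<lambda>w. X w * indicator H w)"
        by (auto simp: Z_def eadd_def indicator_def)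
      have e2: "(\<lambda>w. Z w * indicator (space M - H) w) = (\<lambda>w. Y w * indicator (space M - H) w)"
        by (auto simp: Z_def eadd_def indicator_def)
      have a1: "AE w in M. I Z w * indicator H w = I X w * indicator H w"
        using C2[rule_format, OF ZD H] C2[rule_format, OF X H] unfolding e1
        by eventually_elim simp
      have a2: "AE w in M. I Z w * indicator (space M - H) w = I Y w * indicator (space M - H) w"
        using C2[rule_format, OF ZD H'] C2[rule_format, OF Y H'] unfolding e2
        by eventually_elim simp
      have HS: "H \<subseteq> space M" using H sub sets.sets_into_space by blast
      show "AE w in M. I Z w = eadd (I X w * indicator H w) (I Y w * indicator (space M - H) w)"
        using a1 a2 AE_space
      proof eventually_elim
        case (elim w)
        then show ?case using HS by (cases "w \<in> H") (auto simp: indicator_def eadd_def)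
      qed
    qed
  next
    assume C3: "\<forall>X \<in> D. \<forall>Y \<in> D. \<forall>H \<in> sets N.
              AE \<omega> in M. I (\<lambda>\<omega>. eadd (X \<omega> * indicator H \<omega>) (Y \<omega> * indicator (space M - H) \<omega>)) \<omega>
                = eadd (I X \<omega> * indicator H \<omega>) (I Y \<omega> * indicator (space M - H) \<omega>)"
    show ?C2
    proof (intro ballI)
      fix X H assume X: "X \<in> D" and H: "H \<in> sets N"
      have e: "(\<lambda>w. eadd (X w * indicator H w) (0 * indicator (space M - H) w)) = (\<lambda>w. X w * indicator H w)"
        by (auto simp: eadd_def indicator_def)
      have "AE w in M. I (\<lambda>w. X w * indicator H w) w
          = eadd (I X w * indicator H w) (I (\<lambda>_. 0) w * indicator (space M - H) w)"
        using C3[rule_format, OF X zD H] unfolding e .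
      then show "AE w in M. I (\<lambda>w. X w * indicator H w) w = I X w * indicator H w"
        using I0
      proof eventually_elim
        case (elim w)
        then show ?case by (auto simp: indicator_def eadd_def)
      qed
    qed
  qed
  show ?thesis using A B by blast
qed

end
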